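(* Let $V$ be a unitary irreducible lowest weight representation of $\hat{G}_{\Lambda,\Lambda_F}$ with lowest weight $h$. If $\dot I,\dot J$ are sequences and $\lambda_1,\lambda_2\in\{1,\dots,\Lambda_F\}$ satisfy $\dot I\lambda_1>\dot J\lambda_2$, then $h_{II}(\lambda_2;\dot J)-h_{II}(\lambda_1;\dot I)\ge0$ and $h_{III}(\dot J;\lambda_2)-h_{III}(\dot I;\lambda_1)\ge0$.
   Context: Fix positive integers $\Lambda,\Lambda_F$. A sequence $\dot I=i_1\cdots i_a$ is a finite, possibly empty, sequence of integers in $\{1,\dots,\Lambda\}$; $\#(\dot I)=a$, juxtaposition denotes concatenation, and $\delta^{\dot I}_{\dot J}$ is $1$ if $\dot I=\dot J$ and $0$ otherwise (similarly for integers). Let $\mathcal{T}_o$ be the complex vector space with basis the symbols $\bar\phi^{\lambda_1}\otimes s^{\dot K}\otimes\phi^{\lambda_2}$, $1\le\lambda_1,\lambda_2\le\Lambda_F$, $\dot K$ any sequence. For all sequences $\dot I,\dot J$ and all $\lambda_i\in\{1,\dots,\Lambda_F\}$ define linear operators on $\mathcal{T}_o$: first kind: $\bar\Xi^{\lambda_1}_{\lambda_2}\otimes f^{\dot I}_{\dot J}\otimes\Xi^{\lambda_3}_{\lambda_4}(\bar\phi^{\lambda_5}\otimes s^{\dot K}\otimes\phi^{\lambda_6})=\delta^{\lambda_5}_{\lambda_2}\delta^{\dot K}_{\dot J}\delta^{\lambda_6}_{\lambda_4}\,\bar\phi^{\lambda_1}\otimes s^{\dot I}\otimes\phi^{\lambda_3}$;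 second kind: $\bar\Xi^{\lambda_1}_{\lambda_2}\otimes l^{\dot I}_{\dot J}(\bar\phi^{\lambda_3}\otimes s^{\dot K}\otimes\phi^{\lambda_4})=\delta^{\lambda_3}_{\lambda_2}\sum_{\dot K_1\dot K_2=\dot K}\delta^{\dot K_1}_{\dot J}\,\bar\phi^{\lambda_1}\otimes s^{\dot I\dot K_2}\otimes\phi^{\lambda_4}$; third kind: $r^{\dot I}_{\dot J}\otimes\Xi^{\lambda_1}_{\lambda_2}(\bar\phi^{\lambda_3}\otimes s^{\dot K}\otimes\phi^{\lambda_4})=\delta^{\lambda_4}_{\lambda_2}\sum_{\dot K_1\dot K_2=\dot K}\delta^{\dot K_2}_{\dot J}\,\bar\phi^{\lambda_3}\otimes s^{\dot K_1\dot I}\otimes\phi^{\lambda_1}$; fourth kind: $\sigma^{\dot I}_{\dot J}(\bar\phi^{\lambda_1}\otimes s^{\dot K}\otimes\phi^{\lambda_2})=\sum_{\dot K_1\dot K_2\dot K_3=\dot K}\delta^{\dot K_2}_{\dot J}\,\bar\phi^{\lambda_1}\otimes s^{\dot K_1\dot I\dot K_3}\otimes\phi^{\lambda_2}$; sums over all ways to write $\dot K$ as a concatenation of possibly empty sequences. The open string algebra $\hat{G}_{\Lambda,\Lambda_F}$ is the Lie algebra (commutator bracket) of operators on $\mathcal{T}_o$ spanned by these operators. Ordering: for finite sequences of positive integers $a=a_1\cdots a_m$, $b=b_1\cdots b_n$, $a>b$ means $m>n$, or $m=n\ne0$ and $a_r>b_r$ at the first index $r$ where they differ (applied to concatenations like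 $\dot I\lambda_1$). $G^{00}$ is the span of all $\bar\Xi^{\lambda_1}_{\lambda_1}\otimes f^{\dot I}_{\dot I}\otimes\Xi^{\lambda_2}_{\lambda_2}$, $\bar\Xi^{\lambda}_{\lambda}\otimes l^{\dot I}_{\dot I}$, $r^{\dot I}_{\dot I}\otimes\Xi^{\lambda}_{\lambda}$, $\sigma^{\dot I}_{\dot I}$. $G^-$ is the span of all operators of the four kinds with $\#(\dot I)<\#(\dot J)$, together with those with $\#(\dot I)=\#(\dot J)$ and $\dot J\lambda_2\lambda_4>\dot I\lambda_1\lambda_3$ (first kind), $\dot J\lambda_2>\dot I\lambda_1$ (second and third kind), $\dot J>\dot I$ (fourth kind). $\omega$ is the antilinear anti-involution swapping upper and lower indices: $\omega(\bar\Xi^{\lambda_1}_{\lambda_2}\otimes f^{\dot I}_{\dot J}\otimes\Xi^{\lambda_3}_{\lambda_4})=\bar\Xi^{\lambda_2}_{\lambda_1}\otimes f^{\dot J}_{\dot I}\otimes\Xi^{\lambda_4}_{\lambda_3}$, $\omega(\bar\Xi^{\lambda_1}_{\lambda_2}\otimes l^{\dot I}_{\dot J})=\bar\Xi^{\lambda_2}_{\lambda_1}\otimes l^{\dot J}_{\dot I}$, $\omega(r^{\dot I}_{\dot J}\otimes\Xi^{\lambda_1}_{\lambda_2})=r^{\dot J}_{\dot I}\otimes\Xi^{\lambda_2}_{\lambda_1}$, $\omega(\sigma^{\dot I}_{\dot J})=\sigma^{\dot J}_{\dot I}$. A lowest weight $h$ is a linear functional on $G^{00}$ real on the spanning operators;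 $h_{II}(\lambda;\dot I)$ and $h_{III}(\dot I;\lambda)$ denote its values on $\bar\Xi^{\lambda}_{\lambda}\otimes l^{\dot I}_{\dot I}$ and $r^{\dot I}_{\dot I}\otimes\Xi^{\lambda}_{\lambda}$. A unitary lowest weight representation with lowest weight $h$ is a representation $V$ generated by a vector $v\ne0$ with $G^-v=0$ and $Hv=h(H)v$ for $H\in G^{00}$, carrying a positive definite Hermitian form with $\langle Xu,w\rangle=\langle u,\omega(X)w\rangle$ for all $X$. *)

theory Defs
  imports Complex_Main "HOL-Library.Function_Algebras"
begin

text \<open>A basis element phibar^a (x) s^K (x) phi^b of T_o is encoded as the triple (a, K, b).
  Vectors of T_o are (finitely supported) functions from basis triples to complex numbers;
  operators are given by their action on basis elements (matrix columns).\<close>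

type_synonym bas = "nat \<times> nat list \<times> nat"
type_synonym vec = "bas \<Rightarrow> complex"
type_synonym op = "bas \<Rightarrow> vec"

definition valid_seq :: "nat \<Rightarrow> nat list \<Rightarrow> bool" where
  "valid_seq Lam K \<longleftrightarrow> (\<forall>k\<in>set K. 1 \<le> k \<and> k \<le> Lam)"

definition valid_lam :: "nat \<Rightarrow> nat \<Rightarrow> bool" where
  "valid_lam LamF l \<longleftrightarrow> 1 \<le> l \<and> l \<le> LamF"

definition valid_bas :: "nat \<Rightarrow> nat \<Rightarrow> bas \<Rightarrow> bool" where
  "valid_bas Lam LamF b \<longleftrightarrow>
     (case b of (a, K, c) \<Rightarrow> valid_lam LamF a \<and> valid_seq Lam K \<and> valid_lam LamF c)"

text \<open>Generators: F l1 l2 I J l3 l4 = Xibar^l1_l2 (x) f^I_J (x) Xi^l3_l4 (first kind);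
  L l1 l2 I J = Xibar^l1_l2 (x) l^I_J (second kind);
  R I J l1 l2 = r^I_J (x) Xi^l1_l2 (third kind);  S I J = sigma^I_J (fourth kind).\<close>

datatype gen =
    F nat nat "nat list" "nat list" nat nat
  | L nat nat "nat list" "nat list"
  | R "nat list" "nat list" nat nat
  | S "nat list" "nat list"

fun valid_gen :: "nat \<Rightarrow> nat \<Rightarrow> gen \<Rightarrow> bool" where
  "valid_gen Lam LamF (F l1 l2 I J l3 l4) \<longleftrightarrow>
     valid_lam LamF l1 \<and> valid_lam LamF l2 \<and> valid_lam LamF l3 \<and> valid_lam LamF l4 \<and>
     valid_seq Lam I \<and> valid_seq Lam J"
| "valid_gen Lam LamF (L l1 l2 I J) \<longleftrightarrow>
     valid_lam LamF l1 \<and> valid_lam LamF l2 \<and> valid_seq Lam I \<and> valid_seq Lam J"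
| "valid_gen Lam LamF (R I J l1 l2) \<longleftrightarrow>
     valid_lam LamF l1 \<and> valid_lam LamF l2 \<and> valid_seq Lam I \<and> valid_seq Lam J"
| "valid_gen Lam LamF (S I J) \<longleftrightarrow> valid_seq Lam I \<and> valid_seq Lam J"

definition ebas :: "bas \<Rightarrow> vec" where
  "ebas b = (\<lambda>c. if c = b then 1 else 0)"

text \<open>Action of a generator on a basis element. Sums range over all ways of writing K as a
  concatenation K1 K2 (resp. K1 K2 K3) of possibly empty sequences.\<close>

fun gen_act_raw :: "gen \<Rightarrow> bas \<Rightarrow> vec" where
  "gen_act_raw (F l1 l2 I J l3 l4) (a, K, b) =
     (if a = l2 \<and> K = J \<and> b = l4 then ebas (l1, I, l3) else 0)"
| "gen_act_raw (L l1 l2 I J) (a, K, b) =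
     (if a = l2 then
        (\<Sum>n\<in>{0..length K}. if take n K = J then ebas (l1, I @ drop n K, b) else 0)
      else 0)"
| "gen_act_raw (R I J l1 l2) (a, K, b) =
     (if b = l2 then
        (\<Sum>n\<in>{0..length K}. if drop n K = J then ebas (a, take n K @ I, l1) else 0)
      else 0)"
| "gen_act_raw (S I J) (a, K, b) =
     (\<Sum>(n, m)\<in>{(n, m). n \<le> m \<and> m \<le> length K}.
        if take (m - n) (drop n K) = J then ebas (a, take n K @ I @ drop m K, b) else 0)"

definition op_of :: "nat \<Rightarrow> nat \<Rightarrow> gen \<Rightarrow> op" where
  "op_of Lam LamF g = (\<lambda>b. if valid_bas Lam LamF b then gen_act_raw g b else 0)"

definition osc :: "complex \<Rightarrow> op \<Rightarrow> op" where
  "osc c A = (\<lambda>b c'. c * A b c')"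

definition apply_op :: "op \<Rightarrow> vec \<Rightarrow> vec" where
  "apply_op A x = (\<Sum>b\<in>{b. x b \<noteq> 0}. (\<lambda>c. x b * A b c))"

definition comp_op :: "op \<Rightarrow> op \<Rightarrow> op" where
  "comp_op A B = (\<lambda>b. apply_op A (B b))"

definition bracket :: "op \<Rightarrow> op \<Rightarrow> op" where
  "bracket A B = comp_op A B - comp_op B A"

definition ospan :: "op set \<Rightarrow> op set" where
  "ospan Gs = {X. \<exists>Fs c. finite Fs \<and> Fs \<subseteq> Gs \<and> X = (\<Sum>s\<in>Fs. osc (c s) s)}"

definition Ghat :: "nat \<Rightarrow> nat \<Rightarrow> op set" where
  "Ghat Lam LamF = ospan (op_of Lam LamF ` {g. valid_gen Lam LamF g})"

definition seq_gt :: "nat list \<Rightarrow> nat list \<Rightarrow> bool" where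
  "seq_gt a b \<longleftrightarrow> length a > length b \<or>
     (length a = length b \<and> length a \<noteq> 0 \<and>
      (\<exists>r < length a. take r a = take r b \<and> a ! r > b ! r))"

fun is_G00_gen :: "gen \<Rightarrow> bool" where
  "is_G00_gen (F l1 l2 I J l3 l4) \<longleftrightarrow> l1 = l2 \<and> I = J \<and> l3 = l4"
| "is_G00_gen (L l1 l2 I J) \<longleftrightarrow> l1 = l2 \<and> I = J"
| "is_G00_gen (R I J l1 l2) \<longleftrightarrow> l1 = l2 \<and> I = J"
| "is_G00_gen (S I J) \<longleftrightarrow> I = J"

fun is_Gminus_gen :: "gen \<Rightarrow> bool" where
  "is_Gminus_gen (F l1 l2 I J l3 l4) \<longleftrightarrow> length I < length J \<or>
     (length I = length J \<and> seq_gt (J @ [l2, l4]) (I @ [l1, l3]))"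
| "is_Gminus_gen (L l1 l2 I J) \<longleftrightarrow> length I < length J \<or>
     (length I = length J \<and> seq_gt (J @ [l2]) (I @ [l1]))"
| "is_Gminus_gen (R I J l1 l2) \<longleftrightarrow> length I < length J \<or>
     (length I = length J \<and> seq_gt (J @ [l2]) (I @ [l1]))"
| "is_Gminus_gen (S I J) \<longleftrightarrow> length I < length J \<or>
     (length I = length J \<and> seq_gt J I)"

definition G00 :: "nat \<Rightarrow> nat \<Rightarrow> op set" where
  "G00 Lam LamF = ospan (op_of Lam LamF ` {g. valid_gen Lam LamF g \<and> is_G00_gen g})"

definition Gminus :: "nat \<Rightarrow> nat \<Rightarrow> op set" where
  "Gminus Lam LamF = ospan (op_of Lam LamF ` {g. valid_gen Lam LamF g \<and> is_Gminus_gen g})"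

fun omega_gen :: "gen \<Rightarrow> gen" where
  "omega_gen (F l1 l2 I J l3 l4) = F l2 l1 J I l4 l3"
| "omega_gen (L l1 l2 I J) = L l2 l1 J I"
| "omega_gen (R I J l1 l2) = R J I l2 l1"
| "omega_gen (S I J) = S J I"

text \<open>The representation space V is modelled as a complex subspace of a function space
  'a => complex (every complex vector space is isomorphic to such a subspace).\<close>

definition fsc :: "complex \<Rightarrow> ('a \<Rightarrow> complex) \<Rightarrow> ('a \<Rightarrow> complex)" where
  "fsc c u = (\<lambda>x. c * u x)"

definition csubspace :: "('a \<Rightarrow> complex) set \<Rightarrow> bool" where
  "csubspace W \<longleftrightarrow> 0 \<in> W \<and> (\<forall>u\<in>W. \<forall>w\<in>W. u + w \<in> W) \<and> (\<forall>c. \<forall>u\<in>W. fsc c u \<in> W)"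

definition is_rep :: "nat \<Rightarrow> nat \<Rightarrow> ('a \<Rightarrow> complex) set \<Rightarrow> (op \<Rightarrow> ('a \<Rightarrow> complex) \<Rightarrow> ('a \<Rightarrow> complex)) \<Rightarrow> bool" where
  "is_rep Lam LamF V \<rho> \<longleftrightarrow>
     csubspace V \<and>
     (\<forall>X\<in>Ghat Lam LamF. \<forall>u\<in>V. \<rho> X u \<in> V) \<and>
     (\<forall>X\<in>Ghat Lam LamF. \<forall>u\<in>V. \<forall>w\<in>V. \<forall>a b.
        \<rho> X (fsc a u + fsc b w) = fsc a (\<rho> X u) + fsc b (\<rho> X w)) \<and>
     (\<forall>X\<in>Ghat Lam LamF. \<forall>Y\<in>Ghat Lam LamF. \<forall>u\<in>V. \<forall>a b.
        \<rho> (osc a X + osc b Y) u = fsc a (\<rho> X u) + fsc b (\<rho> Y u)) \<and>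
     (\<forall>X\<in>Ghat Lam LamF. \<forall>Y\<in>Ghat Lam LamF. \<forall>u\<in>V.
        \<rho> (bracket X Y) u = \<rho> X (\<rho> Y u) - \<rho> Y (\<rho> X u))"

definition invariant_subspace :: "nat \<Rightarrow> nat \<Rightarrow> ('a \<Rightarrow> complex) set \<Rightarrow> (op \<Rightarrow> ('a \<Rightarrow> complex) \<Rightarrow> ('a \<Rightarrow> complex)) \<Rightarrow> ('a \<Rightarrow> complex) set \<Rightarrow> bool" where
  "invariant_subspace Lam LamF V \<rho> W \<longleftrightarrow>
     csubspace W \<and> W \<subseteq> V \<and> (\<forall>X\<in>Ghat Lam LamF. \<forall>u\<in>W. \<rho> X u \<in> W)"

definition irreducible_rep :: "nat \<Rightarrow> nat \<Rightarrow> ('a \<Rightarrow> complex) set \<Rightarrow> (op \<Rightarrow> ('a \<Rightarrow> complex) \<Rightarrow> ('a \<Rightarrow> complex)) \<Rightarrow> bool" where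
  "irreducible_rep Lam LamF V \<rho> \<longleftrightarrow> is_rep Lam LamF V \<rho> \<and> V \<noteq> {0} \<and>
     (\<forall>W. invariant_subspace Lam LamF V \<rho> W \<longrightarrow> W = {0} \<or> W = V)"

definition lowest_weight_rep :: "nat \<Rightarrow> nat \<Rightarrow> ('a \<Rightarrow> complex) set \<Rightarrow> (op \<Rightarrow> ('a \<Rightarrow> complex) \<Rightarrow> ('a \<Rightarrow> complex)) \<Rightarrow> (op \<Rightarrow> complex) \<Rightarrow> ('a \<Rightarrow> complex) \<Rightarrow> bool" where
  "lowest_weight_rep Lam LamF V \<rho> h v \<longleftrightarrow>
     is_rep Lam LamF V \<rho> \<and>
     \<comment> \<open>h is a linear functional on G00, real on the spanning operators\<close>
     (\<forall>X\<in>G00 Lam LamF. \<forall>Y\<in>G00 Lam LamF. \<forall>a b. h (osc a X + osc b Y) = a * h X + b * h Y) \<and>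
     (\<forall>g. valid_gen Lam LamF g \<and> is_G00_gen g \<longrightarrow> h (op_of Lam LamF g) \<in> \<real>) \<and>
     \<comment> \<open>V is generated by v \<noteq> 0\<close>
     v \<in> V \<and> v \<noteq> 0 \<and>
     (\<forall>W. invariant_subspace Lam LamF V \<rho> W \<and> v \<in> W \<longrightarrow> W = V) \<and>
     \<comment> \<open>G^- v = 0 and H v = h(H) v\<close>
     (\<forall>X\<in>Gminus Lam LamF. \<rho> X v = 0) \<and>
     (\<forall>H\<in>G00 Lam LamF. \<rho> H v = fsc (h H) v)"

text \<open>The condition is imposed on the spanning
  operators; by (anti)linearity of both sides in X this is the condition for all X.\<close>

definition unitary_rep :: "nat \<Rightarrow> nat \<Rightarrow> ('a \<Rightarrow> complex) set \<Rightarrow> (op \<Rightarrow> ('a \<Rightarrow> complex) \<Rightarrow> ('a \<Rightarrow> complex)) \<Rightarrow> (('a \<Rightarrow> complex) \<Rightarrow> ('a \<Rightarrow> complex) \<Rightarrow> complex) \<Rightarrow> bool" where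
  "unitary_rep Lam LamF V \<rho> B \<longleftrightarrow>
     (\<forall>u\<in>V. \<forall>u'\<in>V. \<forall>w\<in>V. \<forall>a b. B (fsc a u + fsc b u') w = a * B u w + b * B u' w) \<and>
     (\<forall>u\<in>V. \<forall>w\<in>V. B u w = cnj (B w u)) \<and>
     (\<forall>u\<in>V. u \<noteq> 0 \<longrightarrow> Re (B u u) > 0) \<and>
     (\<forall>g. valid_gen Lam LamF g \<longrightarrow> (\<forall>u\<in>V. \<forall>w\<in>V.
        B (\<rho> (op_of Lam LamF g) u) w = B u (\<rho> (op_of Lam LamF (omega_gen g)) w)))"

end

theory Submission
  imports Defs
begin

lemma sum_fun_app: "(\<Sum>s\<in>FF. f s) x = (\<Sum>s\<in>FF. f s x)"
proof (cases "finite FF")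
  case True then show ?thesis by (induction FF rule: finite_induct) auto
next
  case False then show ?thesis by simp
qed

lemma ospan_gen: "x \<in> Gs \<Longrightarrow> x \<in> ospan Gs"
  unfolding ospan_def
  by (rule CollectI, rule exI[of _ "{x}"], rule exI[of _ "\<lambda>_. 1"]) (simp add: osc_def)

lemma ospan_lin:
  assumes "X \<in> ospan Gs" "Y \<in> ospan Gs"
  shows "osc a X + osc b Y \<in> ospan Gs"
proof -
  obtain F1 c1 where F1: "finite F1" "F1 \<subseteq> Gs" "X = (\<Sum>s\<in>F1. osc (c1 s) s)"
    using assms(1) unfolding ospan_def by blast
  obtain F2 c2 where F2: "finite F2" "F2 \<subseteq> Gs" "Y = (\<Sum>s\<in>F2. osc (c2 s) s)"
    using assms(2) unfolding ospan_def by blast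
  define c where "c s = (if s \<in> F1 then a * c1 s else 0) + (if s \<in> F2 then b * c2 s else 0)" for s
  have "osc a X + osc b Y = (\<Sum>s\<in>F1 \<union> F2. osc (c s) s)"
  proof (rule ext, rule ext)
    fix x y
    have e1: "(\<Sum>s\<in>F1 \<union> F2. (if s \<in> F1 then a * c1 s * s x y else 0)) = (\<Sum>s\<in>F1. a * c1 s * s x y)"
      using sum.inter_restrict[of "F1 \<union> F2" "\<lambda>s. a * c1 s * s x y" F1] F1 F2
      by (simp add: Int_absorb1)
    have e2: "(\<Sum>s\<in>F1 \<union> F2. (if s \<in> F2 then b * c2 s * s x y else 0)) = (\<Sum>s\<in>F2. b * c2 s * s x y)"
      using sum.inter_restrict[of "F1 \<union> F2" "\<lambda>s. b * c2 s * s x y" F2] F1 F2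
      by (simp add: Int_absorb1)
    have "(\<Sum>s\<in>F1 \<union> F2. osc (c s) s) x y = (\<Sum>s\<in>F1 \<union> F2. c s * s x y)"
      by (simp add: sum_fun_app osc_def)
    also have "\<dots> = (\<Sum>s\<in>F1 \<union> F2. (if s \<in> F1 then a * c1 s * s x y else 0) + (if s \<in> F2 then b * c2 s * s x y else 0))"
      by (rule sum.cong) (auto simp: c_def algebra_simps)
    also have "\<dots> = (\<Sum>s\<in>F1. a * c1 s * s x y) + (\<Sum>s\<in>F2. b * c2 s * s x y)"
      by (simp add: sum.distrib e1 e2)
    also have "\<dots> = (osc a X + osc b Y) x y"
      by (simp add: F1(3) F2(3) sum_fun_app osc_def sum_distrib_left mult.assoc)
    finally show "(osc a X + osc b Y) x y = (\<Sum>s\<in>F1 \<union> F2. osc (c s) s) x y" by simp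
  qed
  then show ?thesis unfolding ospan_def using F1 F2 by blast
qed

lemma apply_ebas: "apply_op P (ebas b) = P b"
proof -
  have "{c. ebas b c \<noteq> 0} = {b}" by (auto simp: ebas_def)
  then show ?thesis unfolding apply_op_def by (simp add: ebas_def)
qed

lemma apply_zero: "apply_op P 0 = 0"
  unfolding apply_op_def by simp

lemma apply_if: "apply_op P (if C then ebas b else 0) = (if C then P b else 0)"
  by (simp add: apply_ebas apply_zero)

lemma L_act: "gen_act_raw (L l1 l2 I J) (a,K,b) =
   (if a = l2 \<and> take (length J) K = J then ebas (l1, I @ drop (length J) K, b) else 0)"
proof -
  have "(\<Sum>n\<in>{0..length K}. if take n K = J then ebas (l1, I @ drop n K, b) else 0)
     = (\<Sum>n\<in>{0..length K}. if n = length J then (if take (length J) K = J then ebas (l1, I @ drop (length J) K, b) else 0) else 0)"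
  proof (rule sum.cong)
    fix n assume "n \<in> {0..length K}"
    then have "n \<le> length K" by simp
    then show "(if take n K = J then ebas (l1, I @ drop n K, b) else 0) =
      (if n = length J then (if take (length J) K = J then ebas (l1, I @ drop (length J) K, b) else 0) else 0)"
      using length_take[of n K] by (cases "take n K = J") (auto simp: min_absorb1)
  qed simp
  moreover have "take (length J) K = J \<Longrightarrow> length J \<le> length K"
    proof -
    assume e: "take (length J) K = J"
    have "length (take (length J) K) = length J" using e by simp
    then show ?thesis by (simp add: min_def split: if_splits)
  qed
  ultimately show ?thesis by (auto simp: sum.delta')
qed

lemma R_act: "gen_act_raw (R I J l1 l2) (a,K,b) =
   (if b = l2 \<and> drop (length K - length J) K = J then ebas (a, take (length K - length J) K @ I, l1) else 0)"
proof -
  have "(\<Sum>n\<in>{0..length K}. if drop n K = J then ebas (a, take n K @ I, l1) else 0)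
     = (\<Sum>n\<in>{0..length K}. if n = length K - length J then (if drop (length K - length J) K = J then ebas (a, take (length K - length J) K @ I, l1) else 0) else 0)"
  proof (rule sum.cong)
    fix n assume "n \<in> {0..length K}"
    then have "n \<le> length K" by simp
    then show "(if drop n K = J then ebas (a, take n K @ I, l1) else 0) =
      (if n = length K - length J then (if drop (length K - length J) K = J then ebas (a, take (length K - length J) K @ I, l1) else 0) else 0)"
      by auto
  qed simp
  then show ?thesis by (auto simp: sum.delta')
qed

lemma valid_seq_append: "valid_seq Lam (A @ B) \<longleftrightarrow> valid_seq Lam A \<and> valid_seq Lam B"
  by (auto simp: valid_seq_def)

lemma valid_seq_drop: "valid_seq Lam K \<Longrightarrow> valid_seq Lam (drop n K)"
  by (auto simp: valid_seq_def dest: in_set_dropD)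

lemma valid_seq_take: "valid_seq Lam K \<Longrightarrow> valid_seq Lam (take n K)"
  by (auto simp: valid_seq_def dest: in_set_takeD)


lemma opL: "op_of Lam LamF (L p q P Q) (a,K,e) =
  (if valid_bas Lam LamF (a,K,e) \<and> a = q \<and> take (length Q) K = Q then ebas (p, P @ drop (length Q) K, e) else 0)"
  by (auto simp: op_of_def L_act simp del: gen_act_raw.simps)

lemma opR: "op_of Lam LamF (R P Q p q) (a,K,e) =
  (if valid_bas Lam LamF (a,K,e) \<and> e = q \<and> drop (length K - length Q) K = Q
   then ebas (a, take (length K - length Q) K @ P, p) else 0)"
  by (auto simp: op_of_def R_act simp del: gen_act_raw.simps)

lemma compL:
  assumes "valid_seq Lam I" "valid_seq Lam J" "valid_lam LamF l1" "valid_lam LamF l2"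
  shows "comp_op (op_of Lam LamF (L l2 l1 J I)) (op_of Lam LamF (L l1 l2 I J)) (a,K,e) =
    (if valid_bas Lam LamF (a,K,e) \<and> a = l2 \<and> take (length J) K = J then ebas (a,K,e) else 0)"
proof (cases "valid_bas Lam LamF (a,K,e) \<and> a = l2 \<and> take (length J) K = J")
  case True
  then have v: "valid_bas Lam LamF (l1, I @ drop (length J) K, e)"
    using assms by (auto simp: valid_bas_def valid_seq_append valid_seq_drop)
  have K: "J @ drop (length J) K = K" using True append_take_drop_id[of "length J" K] by simp
  have z: "op_of Lam LamF (L l1 l2 I J) (a,K,e) = ebas (l1, I @ drop (length J) K, e)"
    using True by (auto simp: opL)
  have y: "op_of Lam LamF (L l2 l1 J I) (l1, I @ drop (length J) K, e) = ebas (l2, J @ drop (length J) K, e)"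
    using v by (simp add: opL)
  have "comp_op (op_of Lam LamF (L l2 l1 J I)) (op_of Lam LamF (L l1 l2 I J)) (a,K,e)
      = apply_op (op_of Lam LamF (L l2 l1 J I)) (op_of Lam LamF (L l1 l2 I J) (a,K,e))"
    by (simp add: comp_op_def)
  also have "\<dots> = ebas (a,K,e)" unfolding z apply_ebas y K using True by simp
  finally show ?thesis using True by auto
next
  case False
  then have z: "op_of Lam LamF (L l1 l2 I J) (a,K,e) = 0" by (auto simp: opL)
  have "comp_op (op_of Lam LamF (L l2 l1 J I)) (op_of Lam LamF (L l1 l2 I J)) (a,K,e) = 0"
    by (simp add: comp_op_def z apply_zero)
  then show ?thesis using False by auto
qed

lemma compR:
  assumes "valid_seq Lam I" "valid_seq Lam J" "valid_lam LamF l1" "valid_lam LamF l2"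
  shows "comp_op (op_of Lam LamF (R J I l2 l1)) (op_of Lam LamF (R I J l1 l2)) (a,K,e) =
    (if valid_bas Lam LamF (a,K,e) \<and> e = l2 \<and> drop (length K - length J) K = J then ebas (a,K,e) else 0)"
proof (cases "valid_bas Lam LamF (a,K,e) \<and> e = l2 \<and> drop (length K - length J) K = J")
  case True
  define T where "T = take (length K - length J) K"
  then have v: "valid_bas Lam LamF (a, T @ I, l1)"
    using assms True by (auto simp: valid_bas_def valid_seq_append valid_seq_take)
  have K: "T @ J = K" using True append_take_drop_id[of "length K - length J" K] T_def by simp
  have d: "drop (length (T @ I) - length I) (T @ I) = I" by simp
  have t: "take (length (T @ I) - length I) (T @ I) = T" by simp
  have z: "op_of Lam LamF (R I J l1 l2) (a,K,e) = ebas (a, T @ I, l1)"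
    using True by (auto simp: opR T_def)
  have y: "op_of Lam LamF (R J I l2 l1) (a, T @ I, l1) = ebas (a, T @ J, l2)"
    using v by (simp add: opR)
  have "comp_op (op_of Lam LamF (R J I l2 l1)) (op_of Lam LamF (R I J l1 l2)) (a,K,e)
      = apply_op (op_of Lam LamF (R J I l2 l1)) (op_of Lam LamF (R I J l1 l2) (a,K,e))"
    by (simp add: comp_op_def)
  also have "\<dots> = ebas (a,K,e)" unfolding z apply_ebas y K using True by simp
  finally show ?thesis using True by auto
next
  case False
  then have z: "op_of Lam LamF (R I J l1 l2) (a,K,e) = 0" by (auto simp: opR)
  have "comp_op (op_of Lam LamF (R J I l2 l1)) (op_of Lam LamF (R I J l1 l2)) (a,K,e) = 0"
    by (simp add: comp_op_def z apply_zero)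
  then show ?thesis using False by auto
qed

lemma bracketL:
  assumes "valid_seq Lam I" "valid_seq Lam J" "valid_lam LamF l1" "valid_lam LamF l2"
  shows "bracket (op_of Lam LamF (L l2 l1 J I)) (op_of Lam LamF (L l1 l2 I J)) =
    osc 1 (op_of Lam LamF (L l2 l2 J J)) + osc (-1) (op_of Lam LamF (L l1 l1 I I))"
proof (rule ext)
  fix x :: bas
  obtain a K e where x: "x = (a,K,e)" by (cases x) auto
  have c2: "comp_op (op_of Lam LamF (L l1 l2 I J)) (op_of Lam LamF (L l2 l1 J I)) (a,K,e) =
    (if valid_bas Lam LamF (a,K,e) \<and> a = l1 \<and> take (length I) K = I then ebas (a,K,e) else 0)"
    using compL[of Lam J I LamF l2 l1] assms by simp
  have a1: "op_of Lam LamF (L l2 l2 J J) (a,K,e) =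
    (if valid_bas Lam LamF (a,K,e) \<and> a = l2 \<and> take (length J) K = J then ebas (a,K,e) else 0)"
    by (auto simp: opL) (metis append_take_drop_id)
  have a2: "op_of Lam LamF (L l1 l1 I I) (a,K,e) =
    (if valid_bas Lam LamF (a,K,e) \<and> a = l1 \<and> take (length I) K = I then ebas (a,K,e) else 0)"
    by (auto simp: opL) (metis append_take_drop_id)
  show "bracket (op_of Lam LamF (L l2 l1 J I)) (op_of Lam LamF (L l1 l2 I J)) x =
    (osc 1 (op_of Lam LamF (L l2 l2 J J)) + osc (-1) (op_of Lam LamF (L l1 l1 I I))) x"
    unfolding x bracket_def using compL[OF assms, of a K e] c2 a1 a2
    by (auto simp: osc_def fun_eq_iff)
qed

lemma bracketR:
  assumes "valid_seq Lam I" "valid_seq Lam J" "valid_lam LamF l1" "valid_lam LamF l2"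
  shows "bracket (op_of Lam LamF (R J I l2 l1)) (op_of Lam LamF (R I J l1 l2)) =
    osc 1 (op_of Lam LamF (R J J l2 l2)) + osc (-1) (op_of Lam LamF (R I I l1 l1))"
proof (rule ext)
  fix x :: bas
  obtain a K e where x: "x = (a,K,e)" by (cases x) auto
  have c2: "comp_op (op_of Lam LamF (R I J l1 l2)) (op_of Lam LamF (R J I l2 l1)) (a,K,e) =
    (if valid_bas Lam LamF (a,K,e) \<and> e = l1 \<and> drop (length K - length I) K = I then ebas (a,K,e) else 0)"
    using compR[of Lam J I LamF l2 l1] assms by simp
  have a1: "op_of Lam LamF (R J J l2 l2) (a,K,e) =
    (if valid_bas Lam LamF (a,K,e) \<and> e = l2 \<and> drop (length K - length J) K = J then ebas (a,K,e) else 0)"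
    by (auto simp: opR) (metis append_take_drop_id)
  have a2: "op_of Lam LamF (R I I l1 l1) (a,K,e) =
    (if valid_bas Lam LamF (a,K,e) \<and> e = l1 \<and> drop (length K - length I) K = I then ebas (a,K,e) else 0)"
    by (auto simp: opR) (metis append_take_drop_id)
  show "bracket (op_of Lam LamF (R J I l2 l1)) (op_of Lam LamF (R I J l1 l2)) x =
    (osc 1 (op_of Lam LamF (R J J l2 l2)) + osc (-1) (op_of Lam LamF (R I I l1 l1))) x"
    unfolding x bracket_def using compR[OF assms, of a K e] c2 a1 a2
    by (auto simp: osc_def fun_eq_iff)
qed


lemma fsc_zero_sum: "fsc 0 u + fsc 0 w = 0"
  by (rule ext) (simp add: fsc_def)

lemma fsc_c0: "fsc c u + fsc 0 w = fsc c u"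
  by (rule ext) (simp add: fsc_def)

lemma key:
  assumes rep: "is_rep Lam LamF V \<rho>"
    and lw: "lowest_weight_rep Lam LamF V \<rho> h v"
    and un: "unitary_rep Lam LamF V \<rho> B"
    and gY: "valid_gen Lam LamF gY" "is_Gminus_gen gY"
    and gZ: "valid_gen Lam LamF gZ" "omega_gen gZ = gY"
    and A: "A \<in> G00 Lam LamF" and Bo: "Bo \<in> G00 Lam LamF"
    and br: "bracket (op_of Lam LamF gY) (op_of Lam LamF gZ) = osc 1 A + osc (-1) Bo"
  shows "Re (h A) - Re (h Bo) \<ge> 0"
proof -
  define Y where "Y = op_of Lam LamF gY"
  define Z where "Z = op_of Lam LamF gZ"
  define C where "C = osc 1 A + osc (-1) Bo"
  have YG: "Y \<in> Ghat Lam LamF" unfolding Y_def Ghat_def using gY by (intro ospan_gen) auto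
  have ZG: "Z \<in> Ghat Lam LamF" unfolding Z_def Ghat_def using gZ by (intro ospan_gen) auto
  have YM: "Y \<in> Gminus Lam LamF" unfolding Y_def Gminus_def using gY by (intro ospan_gen) auto
  have CG: "C \<in> G00 Lam LamF" unfolding C_def using A Bo unfolding G00_def by (rule ospan_lin)
  have vV: "v \<in> V" using lw unfolding lowest_weight_rep_def by (elim conjE) assumption
  have v0: "v \<noteq> 0" using lw unfolding lowest_weight_rep_def by (elim conjE) assumption
  have Gm: "\<forall>X\<in>Gminus Lam LamF. \<rho> X v = 0"
    using lw unfolding lowest_weight_rep_def by (elim conjE) assumption
  have Yv: "\<rho> Y v = 0" using bspec[OF Gm YM] .
  have hlin: "\<forall>X\<in>G00 Lam LamF. \<forall>Y\<in>G00 Lam LamF. \<forall>a b. h (osc a X + osc b Y) = a * h X + b * h Y"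
    using lw unfolding lowest_weight_rep_def by (elim conjE) assumption
  have "h C = 1 * h A + (-1) * h Bo" unfolding C_def using bspec[OF bspec[OF hlin A] Bo] by blast
  then have hC: "h C = h A - h Bo" by simp
  have G0: "\<forall>H\<in>G00 Lam LamF. \<rho> H v = fsc (h H) v"
    using lw unfolding lowest_weight_rep_def by (elim conjE) assumption
  have rC: "\<rho> C v = fsc (h C) v" using bspec[OF G0 CG] .
  have cs: "csubspace V" using rep unfolding is_rep_def by (elim conjE) assumption
  have V0: "0 \<in> V" using cs unfolding csubspace_def by (elim conjE) assumption
  have Vsc: "\<forall>c. \<forall>u\<in>V. fsc c u \<in> V" using cs unfolding csubspace_def by (elim conjE) assumption
  have clo: "\<forall>X\<in>Ghat Lam LamF. \<forall>u\<in>V. \<rho> X u \<in> V"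
    using rep unfolding is_rep_def by (elim conjE) assumption
  have rlin: "\<forall>X\<in>Ghat Lam LamF. \<forall>u\<in>V. \<forall>w\<in>V. \<forall>a b.
        \<rho> X (fsc a u + fsc b w) = fsc a (\<rho> X u) + fsc b (\<rho> X w)"
    using rep unfolding is_rep_def by (elim conjE) assumption
  have rbr: "\<forall>X\<in>Ghat Lam LamF. \<forall>Y\<in>Ghat Lam LamF. \<forall>u\<in>V.
        \<rho> (bracket X Y) u = \<rho> X (\<rho> Y u) - \<rho> Y (\<rho> X u)"
    using rep unfolding is_rep_def by (elim conjE) assumption
  have Z0: "\<rho> Z 0 = 0"
  proof -
    have "\<rho> Z (fsc 0 0 + fsc 0 0) = fsc 0 (\<rho> Z 0) + fsc 0 (\<rho> Z 0)"
      using bspec[OF bspec[OF bspec[OF rlin ZG] V0] V0] by blast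
    then show ?thesis by (simp add: fsc_zero_sum)
  qed
  have "\<rho> (bracket Y Z) v = \<rho> Y (\<rho> Z v) - \<rho> Z (\<rho> Y v)"
    using bspec[OF bspec[OF bspec[OF rbr YG] ZG] vV] .
  then have "\<rho> C v = \<rho> Y (\<rho> Z v) - \<rho> Z (\<rho> Y v)"
    using br unfolding C_def Y_def Z_def by simp
  then have YZv: "\<rho> Y (\<rho> Z v) = fsc (h C) v" using Yv Z0 rC by simp
  define w where "w = \<rho> Z v"
  have wV: "w \<in> V" unfolding w_def using bspec[OF bspec[OF clo ZG] vV] .
  have uni: "\<forall>g. valid_gen Lam LamF g \<longrightarrow> (\<forall>u\<in>V. \<forall>w\<in>V.
        B (\<rho> (op_of Lam LamF g) u) w = B u (\<rho> (op_of Lam LamF (omega_gen g)) w))"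
    using un unfolding unitary_rep_def by (elim conjE) assumption
  have "B (\<rho> (op_of Lam LamF gZ) v) w = B v (\<rho> (op_of Lam LamF (omega_gen gZ)) w)"
    using bspec[OF bspec[OF mp[OF spec[OF uni, of gZ] gZ(1)] vV] wV] .
  then have Bw: "B w w = B v (\<rho> Y w)" unfolding w_def Y_def Z_def gZ(2) .
  have lin0: "\<forall>u\<in>V. \<forall>u'\<in>V. \<forall>w\<in>V. \<forall>a b. B (fsc a u + fsc b u') w = a * B u w + b * B u' w"
    using un unfolding unitary_rep_def by (elim conjE) assumption
  have lin: "B (fsc a u + fsc b u') x = a * B u x + b * B u' x" if "u \<in> V" "u' \<in> V" "x \<in> V" for u u' x a b
    using bspec[OF bspec[OF bspec[OF lin0 that(1)] that(2)] that(3)] by blast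
  have herm0: "\<forall>u\<in>V. \<forall>w\<in>V. B u w = cnj (B w u)"
    using un unfolding unitary_rep_def by (elim conjE) assumption
  have herm: "B u x = cnj (B x u)" if "u \<in> V" "x \<in> V" for u x
    using bspec[OF bspec[OF herm0 that(1)] that(2)] .
  have pos0: "\<forall>u\<in>V. u \<noteq> 0 \<longrightarrow> Re (B u u) > 0"
    using un unfolding unitary_rep_def by (elim conjE) assumption
  have pos: "Re (B u u) > 0" if "u \<in> V" "u \<noteq> 0" for u
    using bspec[OF pos0 that(1)] that(2) by blast
  have fV: "fsc c v \<in> V" for c using Vsc vV by blast
  have "B (fsc (h C) v + fsc 0 v) v = h C * B v v + 0 * B v v"
    using lin[OF vV vV vV] .
  then have "B (fsc (h C) v) v = h C * B v v" by (simp add: fsc_c0)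
  then have Bvf: "B v (fsc (h C) v) = cnj (h C) * B v v"
    using herm[OF vV fV] herm[OF vV vV] by simp
  have Bww: "B w w = cnj (h C) * B v v" using Bw YZv Bvf unfolding w_def by simp
  have wpos: "Re (B w w) \<ge> 0"
  proof (cases "w = 0")
    case True
    have "B (fsc 0 0 + fsc 0 0) 0 = 0 * B 0 0 + 0 * B 0 0" using lin[OF V0 V0 V0] .
    then show ?thesis using True by (simp add: fsc_zero_sum)
  next
    case False
    then show ?thesis using pos[OF wV] by simp
  qed
  have vpos: "Re (B v v) > 0" using pos[OF vV v0] .
  have "B v v = cnj (B v v)" using herm[OF vV vV] .
  then have vim: "Im (B v v) = 0" by (metis cnj.sel(2) neg_equal_zero)
  have "Re (B w w) = Re (h C) * Re (B v v)" using Bww vim by simp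
  then have "Re (h C) \<ge> 0" using wpos vpos by (simp add: zero_le_mult_iff)
  then show ?thesis using hC by simp
qed

theorem lemma17:
  fixes Lam LamF :: nat
    and V :: "('a \<Rightarrow> complex) set"
    and \<rho> :: "op \<Rightarrow> ('a \<Rightarrow> complex) \<Rightarrow> ('a \<Rightarrow> complex)"
    and B :: "('a \<Rightarrow> complex) \<Rightarrow> ('a \<Rightarrow> complex) \<Rightarrow> complex"
    and h :: "op \<Rightarrow> complex"
    and v :: "'a \<Rightarrow> complex"
    and I J :: "nat list" and l1 l2 :: nat
  assumes "Lam > 0" and "LamF > 0"
    and "irreducible_rep Lam LamF V \<rho>"
    and "lowest_weight_rep Lam LamF V \<rho> h v"
    and "unitary_rep Lam LamF V \<rho> B"
    and "valid_seq Lam I" and "valid_seq Lam J"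
    and "valid_lam LamF l1" and "valid_lam LamF l2"
    and "seq_gt (I @ [l1]) (J @ [l2])"
  shows "Re (h (op_of Lam LamF (L l2 l2 J J))) - Re (h (op_of Lam LamF (L l1 l1 I I))) \<ge> 0
     \<and> Re (h (op_of Lam LamF (R J J l2 l2))) - Re (h (op_of Lam LamF (R I I l1 l1))) \<ge> 0"
proof
  have rep: "is_rep Lam LamF V \<rho>" using assms(3) unfolding irreducible_rep_def by auto
  have len: "length J \<le> length I" using assms(10) unfolding seq_gt_def by auto
  have gm: "length J < length I \<or> (length J = length I \<and> seq_gt (I @ [l1]) (J @ [l2]))"
    using len assms(10) by auto
  show "Re (h (op_of Lam LamF (L l2 l2 J J))) - Re (h (op_of Lam LamF (L l1 l1 I I))) \<ge> 0"
  proof (rule key[OF rep assms(4) assms(5), of "L l2 l1 J I" "L l1 l2 I J"])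
    show "op_of Lam LamF (L l2 l2 J J) \<in> G00 Lam LamF" unfolding G00_def
      using assms(6-9) by (intro ospan_gen) auto
    show "op_of Lam LamF (L l1 l1 I I) \<in> G00 Lam LamF" unfolding G00_def
      using assms(6-9) by (intro ospan_gen) auto
    show "bracket (op_of Lam LamF (L l2 l1 J I)) (op_of Lam LamF (L l1 l2 I J)) =
      osc 1 (op_of Lam LamF (L l2 l2 J J)) + osc (- 1) (op_of Lam LamF (L l1 l1 I I))"
      using bracketL assms(6-9) by blast
  qed (use assms(6-9) gm in auto)
  show "Re (h (op_of Lam LamF (R J J l2 l2))) - Re (h (op_of Lam LamF (R I I l1 l1))) \<ge> 0"
  proof (rule key[OF rep assms(4) assms(5), of "R J I l2 l1" "R I J l1 l2"])
    show "op_of Lam LamF (R J J l2 l2) \<in> G00 Lam LamF" unfolding G00_def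
      using assms(6-9) by (intro ospan_gen) auto
    show "op_of Lam LamF (R I I l1 l1) \<in> G00 Lam LamF" unfolding G00_def
      using assms(6-9) by (intro ospan_gen) auto
    show "bracket (op_of Lam LamF (R J I l2 l1)) (op_of Lam LamF (R I J l1 l2)) =
      osc 1 (op_of Lam LamF (R J J l2 l2)) + osc (- 1) (op_of Lam LamF (R I I l1 l1))"
      using bracketR assms(6-9) by blast
  qed (use assms(6-9) gm in auto)
qed

end
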